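(* Let $f,g\in \mathbb{Z}[\alpha_1^{\pm 1},\ldots,\alpha_r^{\pm 1}]$. Then: (1) There exists a set $K\subset \mathbb{Z}^r$ contained in a finite union of hyperplanes of $\mathbb{R}^r$ such that if $\mathcal N(f)\subset \mathcal N(g)$ then $\mathcal N(f(\xi^s))\subset \mathcal N(g(\xi^s))$ for all $s\in \mathbb{Z}^r\setminus K$. (2) If $K\subset \mathbb{Z}^r$ is contained in a finite union of hyperplanes and $\mathcal N(f(\xi^s))\subset \mathcal N(g(\xi^s))$ for all $s\in \mathbb{Z}^r\setminus K$, then $\mathcal N(f)\subset \mathcal N(g)$. (3) If $K\subset \mathbb{Z}^r$ is contained in a finite union of hyperplanes and $\mathcal N(f)\subsetneq \mathcal N(g)$, then there is an $s\in \mathbb{Z}^r\setminus K$ with $\mathcal N(f(\xi^s))\subsetneq \mathcal N(g(\xi^s))$.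
   Context: For $f\in \mathbb{Z}[\alpha_1^{\pm 1},\ldots,\alpha_r^{\pm 1}]$ the Newton polytope $\mathcal N(f)\subset\mathbb{R}^r$ is the convex hull of the set of exponent vectors $(u_1,\ldots,u_r)\in\mathbb{Z}^r$ such that the coefficient of $\alpha_1^{u_1}\cdots\alpha_r^{u_r}$ in $f$ is nonzero (for a Laurent polynomial in one variable $\xi$ it is a segment in $\mathbb{R}$). For $s=(s_1,\ldots,s_r)\in\mathbb{Z}^r$, the toric substitution $f\mapsto f(\xi^s)$ is the ring homomorphism $\mathbb{Z}[\alpha_1^{\pm1},\ldots,\alpha_r^{\pm1}]\to\mathbb{Z}[\xi^{\pm1}]$, $\alpha_i\mapsto \xi^{s_i}$. *)

theory Defs
  imports "HOL-Analysis.Analysis"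
begin

text \<open>A Laurent polynomial in r variables with integer coefficients is represented by its
coefficient function on exponent vectors in Z^r (here int^'n, r = CARD('n)),
required to have finite support.\<close>

definition laurent_poly :: "(int^'n \<Rightarrow> int) \<Rightarrow> bool" where
  "laurent_poly f \<longleftrightarrow> finite {u. f u \<noteq> 0}"

definition real_vec :: "int^'n \<Rightarrow> real^'n" where
  "real_vec u = (\<chi> i. real_of_int (u $ i))"

definition newton :: "(int^'n \<Rightarrow> int) \<Rightarrow> (real^'n) set" where
  "newton f = convex hull (real_vec ` {u. f u \<noteq> 0})"

text \<open>Toric substitution alpha_i := xi^(s_i): coefficient function of the univariate
Laurent polynomial f(xi^s).\<close>
definition toric_subst :: "(int^'n \<Rightarrow> int) \<Rightarrow> int^'n \<Rightarrow> (int \<Rightarrow> int)" where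
  "toric_subst f s = (\<lambda>k. \<Sum>u \<in> {u. f u \<noteq> 0 \<and> (\<Sum>i\<in>UNIV. s $ i * u $ i) = k}. f u)"

definition newton1 :: "(int \<Rightarrow> int) \<Rightarrow> real set" where
  "newton1 p = convex hull (real_of_int ` {k. p k \<noteq> 0})"

definition in_finite_hyperplanes :: "(int^'n) set \<Rightarrow> bool" where
  "in_finite_hyperplanes K \<longleftrightarrow>
     (\<exists>H :: ((real^'n) \<times> real) set. finite H \<and> (\<forall>(a,b)\<in>H. a \<noteq> 0) \<and>
        real_vec ` K \<subseteq> (\<Union>(a,b)\<in>H. {x. a \<bullet> x = b}))"

end

theory Submission
  imports Defs
begin

definition idot :: "int^'n \<Rightarrow> int^'n \<Rightarrow> int" where
  "idot s u = (\<Sum>i\<in>UNIV. s $ i * u $ i)"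

lemma real_idot: "real_of_int (idot s u) = real_vec s \<bullet> real_vec u"
  by (simp add: idot_def real_vec_def inner_vec_def)

lemma real_vec_inj: "real_vec u = real_vec w \<Longrightarrow> u = w"
  by (simp add: real_vec_def vec_eq_iff)

lemma real_vec_smult: "real_vec (of_nat m *s z) = real m *\<^sub>R real_vec z"
  by (simp add: real_vec_def vec_eq_iff)

lemma toric_alt: "toric_subst f s k = sum f {u. f u \<noteq> 0 \<and> idot s u = k}"
  by (simp add: toric_subst_def idot_def)

lemma toric_supp_sub: "{k. toric_subst f s k \<noteq> 0} \<subseteq> idot s ` {u. f u \<noteq> 0}"
proof
  fix k assume "k \<in> {k. toric_subst f s k \<noteq> 0}"
  have "{u. f u \<noteq> 0 \<and> idot s u = k} \<noteq> {}"
  proof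
    assume "{u. f u \<noteq> 0 \<and> idot s u = k} = {}"
    then have "toric_subst f s k = 0" unfolding toric_alt by (simp only: sum.empty)
    then show False using \<open>k \<in> {k. toric_subst f s k \<noteq> 0}\<close> by simp
  qed
  then show "k \<in> idot s ` {u. f u \<noteq> 0}" by auto
qed

lemma toric_supp_eq:
  assumes "inj_on (idot s) {u. f u \<noteq> 0}"
  shows "{k. toric_subst f s k \<noteq> 0} = idot s ` {u. f u \<noteq> 0}"
proof
  show "idot s ` {u. f u \<noteq> 0} \<subseteq> {k. toric_subst f s k \<noteq> 0}"
  proof
    fix k assume "k \<in> idot s ` {u. f u \<noteq> 0}"
    then obtain u where u: "f u \<noteq> 0" "k = idot s u" by auto
    have "{u'. f u' \<noteq> 0 \<and> idot s u' = k} = {u}"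
      using u assms by (auto simp: inj_on_def)
    then show "k \<in> {k. toric_subst f s k \<noteq> 0}" using u by (simp add: toric_alt)
  qed
qed (rule toric_supp_sub)

lemma linear_inner_L: "linear (\<lambda>x::real^'n. a \<bullet> x)"
  by (simp add: bounded_linear.linear bounded_linear_inner_right)

lemma img_eq: "real_of_int ` idot s ` S = (\<lambda>x. real_vec s \<bullet> x) ` real_vec ` S"
  by (simp add: image_image real_idot)

lemma newton1_sub: "newton1 (toric_subst f s) \<subseteq> (\<lambda>x. real_vec s \<bullet> x) ` newton f"
proof -
  have "newton1 (toric_subst f s) \<subseteq> convex hull (real_of_int ` idot s ` {u. f u \<noteq> 0})"
    unfolding newton1_def by (intro hull_mono image_mono toric_supp_sub)
  also have "\<dots> = (\<lambda>x. real_vec s \<bullet> x) ` newton f"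
    unfolding img_eq newton_def by (simp add: convex_hull_linear_image[OF linear_inner_L])
  finally show ?thesis .
qed

lemma newton1_eq:
  assumes "inj_on (idot s) {u. f u \<noteq> 0}"
  shows "newton1 (toric_subst f s) = (\<lambda>x. real_vec s \<bullet> x) ` newton f"
  unfolding newton1_def toric_supp_eq[OF assms] img_eq newton_def
  by (simp add: convex_hull_linear_image[OF linear_inner_L])

lemma incl:
  assumes "inj_on (idot s) {u. g u \<noteq> 0}" "newton f \<subseteq> newton g"
  shows "newton1 (toric_subst f s) \<subseteq> newton1 (toric_subst g s)"
  using newton1_sub[of f s] newton1_eq[OF assms(1)] assms(2) by blast

lemma upper:
  assumes "\<forall>u\<in>{u. f u \<noteq> 0}. real_of_int (idot s u) < c"
  shows "newton1 (toric_subst f s) \<subseteq> {..<c}"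
proof -
  have "newton1 (toric_subst f s) \<subseteq> convex hull (real_of_int ` idot s ` {u. f u \<noteq> 0})"
    unfolding newton1_def by (intro hull_mono image_mono toric_supp_sub)
  also have "\<dots> \<subseteq> {..<c}"
    by (rule hull_minimal) (use assms in \<open>auto simp: convex_real_interval\<close>)
  finally show ?thesis .
qed

lemma in_newton1:
  assumes "inj_on (idot s) {u. f u \<noteq> 0}" "f u \<noteq> 0"
  shows "real_of_int (idot s u) \<in> newton1 (toric_subst f s)"
  unfolding newton1_def toric_supp_eq[OF assms(1)]
  using assms(2) by (intro hull_inc) auto

lemma interior_UN_hyp:
  fixes C :: "'a::euclidean_space set"
  shows "finite C \<Longrightarrow> 0 \<notin> C \<Longrightarrow> interior (\<Union>c\<in>C. {x. c \<bullet> x = 0}) = {}"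
proof (induction C rule: finite_induct)
  case empty then show ?case by simp
next
  case (insert c C)
  have cl: "closed (\<Union>c\<in>C. {x. c \<bullet> x = 0})"
    using insert by (intro closed_UN) (auto simp: closed_hyperplane)
  have "interior ((\<Union>c\<in>C. {x. c \<bullet> x = 0}) \<union> {x. c \<bullet> x = 0}) = interior (\<Union>c\<in>C. {x. c \<bullet> x = 0})"
    using insert by (intro interior_closed_Un_empty_interior[OF cl]) auto
  then show ?case using insert by (simp add: Un_commute)
qed

lemma rat_vec_scale:
  fixes q :: "real^'n"
  assumes "\<forall>i. q $ i \<in> \<rat>"
  shows "\<exists>D::real. D > 0 \<and> (\<forall>i. D * q $ i \<in> \<int>)"
proof -
  have "\<forall>i. \<exists>d::int. d > 0 \<and> of_int d * q $ i \<in> \<int>"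
  proof
    fix i
    obtain a b where ab: "b > 0" "q $ i = of_int a / of_int b"
      using assms Rats_cases' by meson
    then have "of_int b * q $ i = of_int a" by simp
    then show "\<exists>d::int. d > 0 \<and> of_int d * q $ i \<in> \<int>" using ab(1) by (intro exI[of _ b]) auto
  qed
  then obtain d where dd: "\<forall>i. d i > (0::int) \<and> of_int (d i) * q $ i \<in> \<int>"
    unfolding choice_iff by blast
  have d: "\<And>i. d i > (0::int)" "\<And>i. of_int (d i) * q $ i \<in> \<int>" using dd by auto
  define D where "D = (\<Prod>i\<in>UNIV. real_of_int (d i))"
  have D0: "D > 0" unfolding D_def using d(1) by (intro prod_pos) auto
  have DI: "D * q $ i \<in> \<int>" for i
  proof -
    have "D = (\<Prod>j\<in>UNIV-{i}. real_of_int (d j)) * real_of_int (d i)"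
      unfolding D_def using prod.remove[of UNIV i "\<lambda>j. real_of_int (d j)"] by (simp add: mult.commute)
    then have "D * q $ i = (\<Prod>j\<in>UNIV-{i}. real_of_int (d j)) * (real_of_int (d i) * q $ i)" by (simp only: mult.assoc)
    also have "\<dots> \<in> \<int>" by (rule Ints_mult[OF _ d(2)]) (intro Ints_prod Ints_of_int)
    finally show ?thesis .
  qed
  show ?thesis by (rule exI[of _ D], rule conjI[OF D0], rule allI, rule DI)
qed


lemma rat_point:
  fixes Om :: "(real^'n) set"
  assumes "open Om" "Om \<noteq> {}"
  shows "\<exists>q\<in>Om. \<forall>i. q $ i \<in> \<rat>"
proof -
  obtain x where x: "x \<in> Om" using assms(2) by auto
  obtain e where e: "e > 0" "ball x e \<subseteq> Om" using assms(1) x open_contains_ball by blast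
  obtain a b where ab: "\<forall>i\<in>Basis. a \<bullet> i \<in> \<rat> \<and> b \<bullet> i \<in> \<rat>" "x \<in> box a b" "box a b \<subseteq> ball x e"
    using rational_boxes[OF e(1)] by blast
  define q where "q = (1/2) *\<^sub>R (a + b)"
  have "q \<in> box a b"
  proof -
    have "\<forall>i\<in>Basis. a \<bullet> i < x \<bullet> i \<and> x \<bullet> i < b \<bullet> i" using ab(2) by (simp add: mem_box)
    then have "\<forall>i\<in>Basis. a \<bullet> i < q \<bullet> i \<and> q \<bullet> i < b \<bullet> i"
      unfolding q_def by (auto simp: inner_add_left)
    then show ?thesis by (simp add: mem_box)
  qed
  then have "q \<in> Om" using ab(3) e(2) by blast
  moreover have "q $ i \<in> \<rat>" for i
  proof -
    have B: "axis i (1::real) \<in> Basis" by (simp add: Basis_real_def)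
    have "q $ i = q \<bullet> axis i 1" by (simp add: inner_axis)
    also have "\<dots> = (1/2) * (a \<bullet> axis i 1 + b \<bullet> axis i 1)" unfolding q_def by (simp add: inner_add_left)
    also have "\<dots> \<in> \<rat>" using ab(1) B by (intro Rats_mult Rats_add) auto
    finally show ?thesis .
  qed
  ultimately show ?thesis by blast
qed

lemma int_point:
  fixes Om :: "(real^'n) set"
  assumes "open Om" "Om \<noteq> {}" "\<And>x t. x \<in> Om \<Longrightarrow> t > 0 \<Longrightarrow> t *\<^sub>R x \<in> Om"
  shows "\<exists>z. real_vec z \<in> Om"
proof -
  obtain q where q: "q \<in> Om" "\<forall>i. q $ i \<in> \<rat>" using rat_point[OF assms(1,2)] by blast
  obtain D where D: "D > 0" "\<forall>i. D * q $ i \<in> \<int>" using rat_vec_scale[OF q(2)] by blast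
  define z where "z = (\<chi> i. \<lfloor>D * q $ i\<rfloor>)"
  have "real_vec z = D *\<^sub>R q"
    unfolding real_vec_def z_def vec_eq_iff using D(2) by simp
  then show ?thesis using assms(3)[OF q(1) D(1)] by metis
qed

lemma pick_m:
  fixes y :: "real^'n"
  assumes "finite H" "\<forall>(a,b)\<in>H. a \<bullet> y \<noteq> 0"
  shows "\<exists>m::nat. m > 0 \<and> (\<forall>(a,b)\<in>H. a \<bullet> (real m *\<^sub>R y) \<noteq> b)"
proof (rule ccontr)
  assume nt: "\<not> ?thesis"
  define S where "S = (\<lambda>(a,b). b / (a \<bullet> y)) ` H"
  have "real ` {1..card H + 1} \<subseteq> S"
  proof
    fix r assume "r \<in> real ` {1..card H + 1}"
    then obtain m where m: "m \<in> {1..card H + 1}" "r = real m" by auto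
    have "m > 0" using m(1) by simp
    then have "\<not> (\<forall>(a,b)\<in>H. a \<bullet> (real m *\<^sub>R y) \<noteq> b)" using nt by blast
    then have "\<exists>(a,b)\<in>H. a \<bullet> (real m *\<^sub>R y) = b" by blast
    then obtain a b where ab: "(a,b) \<in> H" "a \<bullet> (real m *\<^sub>R y) = b" by blast
    then have "real m * (a \<bullet> y) = b" by simp
    moreover have "a \<bullet> y \<noteq> 0" using assms(2) ab(1) by blast
    ultimately have "real m = b / (a \<bullet> y)" by (simp add: field_simps)
    then show "r \<in> S" unfolding S_def using ab(1) m(2) by (auto intro!: image_eqI[where x="(a,b)"])
  qed
  then have "card (real ` {1..card H + 1}) \<le> card S"
    using assms(1) unfolding S_def by (intro card_mono) auto
  also have "\<dots> \<le> card H" unfolding S_def by (rule card_image_le[OF assms(1)])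
  also have "card (real ` {1..card H + 1}) = card H + 1"
    by (subst card_image) (auto simp: inj_on_def)
  finally show False by simp
qed

lemma key:
  fixes v :: "real^'n" and P :: "(real^'n) set" and A :: "(int^'n) set"
  assumes "finite P" "v \<notin> convex hull P" "finite A" "in_finite_hyperplanes K"
  shows "\<exists>s. s \<notin> K \<and> inj_on (idot s) A \<and> (\<forall>y\<in>P. real_vec s \<bullet> y < real_vec s \<bullet> v)"
proof -
  obtain H :: "((real^'n) \<times> real) set" where H: "finite H" "\<forall>(a,b)\<in>H. a \<noteq> 0"
    "real_vec ` K \<subseteq> (\<Union>(a,b)\<in>H. {x. a \<bullet> x = b})"
    using assms(4) unfolding in_finite_hyperplanes_def by blast
  obtain a b where ab: "inner a v < b" "\<forall>x\<in>convex hull P. inner a x > b"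
    using separating_hyperplane_closed_point[OF convex_convex_hull _ assms(2)]
      compact_imp_closed[OF compact_convex_hull[OF finite_imp_compact[OF assms(1)]]] by blast
  define Om where "Om = {x::real^'n. \<forall>y\<in>P. x \<bullet> y < x \<bullet> v}"
  have "-a \<in> Om" unfolding Om_def
  proof (intro CollectI ballI)
    fix y assume "y \<in> P"
    then have "y \<in> convex hull P" using hull_subset[of P convex] by blast
    then have "a \<bullet> y > b" using ab(2) by blast
    then show "-a \<bullet> y < -a \<bullet> v" using ab(1) by simp
  qed
  then have One: "Om \<noteq> {}" by blast
  have "Om = (\<Inter>y\<in>P. {x. x \<bullet> y < x \<bullet> v})" unfolding Om_def by auto
  moreover have "\<forall>y\<in>P. open {x::real^'n. x \<bullet> y < x \<bullet> v}"
    by (intro ballI open_Collect_less continuous_on_inner continuous_on_id continuous_on_const)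
  ultimately have Oopen: "open Om" using assms(1) by (simp add: open_INT)
  have Ocone: "t *\<^sub>R x \<in> Om" if "x \<in> Om" "t > 0" for x t
    using that unfolding Om_def by auto
  define C where "C = fst ` H \<union> (\<lambda>(u,w). real_vec u - real_vec w) ` {(u,w). u\<in>A \<and> w\<in>A \<and> u\<noteq>w}"
  have "{(u,w). u\<in>A \<and> w\<in>A \<and> u\<noteq>w} \<subseteq> A \<times> A" by blast
  then have "finite {(u,w). u\<in>A \<and> w\<in>A \<and> u\<noteq>w}" using assms(3) finite_subset by blast
  then have Cfin: "finite C" unfolding C_def using H(1) by (intro finite_UnI finite_imageI)
  have C0: "0 \<notin> C"
  proof
    assume "0 \<in> C"
    then consider "0 \<in> fst ` H" | "0 \<in> (\<lambda>(u,w). real_vec u - real_vec w) ` {(u,w). u\<in>A \<and> w\<in>A \<and> u\<noteq>w}"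
      unfolding C_def by blast
    then show False
    proof cases
      case 1 then obtain p where "0 = fst p" "p \<in> H" by (rule imageE)
      then show False using H(2) by (cases p) auto
    next
      case 2 then obtain p where p: "0 = (\<lambda>(u,w). real_vec u - real_vec w) p"
        "p \<in> {(u,w). u\<in>A \<and> w\<in>A \<and> u\<noteq>w}" by (rule imageE)
      obtain u w where "p = (u,w)" by (cases p)
      then show False using p real_vec_inj[of u w] by simp
    qed
  qed
  define U where "U = (\<Union>c\<in>C. {x::real^'n. c \<bullet> x = 0})"
  have Ucl: "closed U" unfolding U_def using Cfin by (intro closed_UN) (auto simp: closed_hyperplane)
  have Uint: "interior U = {}" unfolding U_def by (rule interior_UN_hyp[OF Cfin C0])
  have ne: "Om - U \<noteq> {}"
  proof
    assume "Om - U = {}"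
    then have "Om \<subseteq> U" by blast
    then have "Om \<subseteq> interior U" using Oopen interior_maximal by blast
    then show False using Uint One by blast
  qed
  have op: "open (Om - U)" using Oopen Ucl by (rule open_Diff)
  have cone: "t *\<^sub>R x \<in> Om - U" if x: "x \<in> Om - U" and t: "t > 0" for x t
  proof -
    have "t *\<^sub>R x \<in> Om" using x t Ocone by blast
    moreover have "t *\<^sub>R x \<notin> U"
    proof
      assume "t *\<^sub>R x \<in> U"
      then obtain c where c: "c \<in> C" "c \<bullet> (t *\<^sub>R x) = 0" unfolding U_def by blast
      then have "c \<bullet> x = 0" using t by simp
      then have "x \<in> U" unfolding U_def using c(1) by blast
      then show False using x by blast
    qed
    ultimately show ?thesis by blast
  qed
  obtain z where z: "real_vec z \<in> Om - U" using int_point[OF op ne cone] by blast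
  define y where "y = real_vec z"
  have "\<forall>p\<in>H. fst p \<bullet> y \<noteq> 0"
  proof
    fix p assume p: "p \<in> H"
    have "fst p \<in> C" unfolding C_def using p by (intro UnI1 imageI)
    then show "fst p \<bullet> y \<noteq> 0" using z unfolding y_def U_def by blast
  qed
  then have "\<forall>(a,b)\<in>H. a \<bullet> y \<noteq> 0" by (simp add: case_prod_beta)
  then obtain m :: nat where m: "m > 0" "\<forall>(a,b)\<in>H. a \<bullet> (real m *\<^sub>R y) \<noteq> b"
    using pick_m[OF H(1)] by blast
  define s where "s = of_nat m *s z"
  have rs: "real_vec s = real m *\<^sub>R y" unfolding s_def y_def by (rule real_vec_smult)
  have "s \<notin> K"
  proof
    assume "s \<in> K"
    then have "real_vec s \<in> (\<Union>(a,b)\<in>H. {x. a \<bullet> x = b})" using H(3) by blast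
    then obtain a b where ab: "(a,b) \<in> H" "a \<bullet> real_vec s = b" by blast
    show False using bspec[OF m(2) ab(1)] ab(2) rs by simp
  qed
  moreover have "inj_on (idot s) A"
  proof (rule inj_onI, rule ccontr)
    fix u w assume uw: "u \<in> A" "w \<in> A" "idot s u = idot s w" "u \<noteq> w"
    define c where "c = real_vec u - real_vec w"
    have "c \<in> C" unfolding C_def c_def using uw
      by (intro UnI2 image_eqI[where x="(u,w)"]) auto
    then have cy: "c \<bullet> y \<noteq> 0" using z unfolding y_def U_def by blast
    have "c \<bullet> real_vec s = real_of_int (idot s u) - real_of_int (idot s w)"
      unfolding c_def real_idot by (simp add: inner_diff_left inner_diff_right inner_commute)
    also have "\<dots> = 0" using uw(3) by simp
    finally have "real m * (c \<bullet> y) = 0" using rs by simp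
    then show False using cy m(1) by simp
  qed
  moreover have "real_vec s \<in> Om" unfolding rs using z m(1) Ocone[of y "real m"] unfolding y_def by simp
  then have "\<forall>y\<in>P. real_vec s \<bullet> y < real_vec s \<bullet> v" unfolding Om_def by blast
  ultimately show ?thesis by blast
qed


theorem proposition3p3:
  fixes f g :: "int^'n \<Rightarrow> int"
  assumes "laurent_poly f" and "laurent_poly g"
  shows "(\<exists>K. in_finite_hyperplanes K \<and>
            (newton f \<subseteq> newton g \<longrightarrow>
               (\<forall>s. s \<notin> K \<longrightarrow> newton1 (toric_subst f s) \<subseteq> newton1 (toric_subst g s))))
       \<and> (\<forall>K. in_finite_hyperplanes K \<longrightarrow>
            (\<forall>s. s \<notin> K \<longrightarrow> newton1 (toric_subst f s) \<subseteq> newton1 (toric_subst g s)) \<longrightarrow>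
            newton f \<subseteq> newton g)
       \<and> (\<forall>K. in_finite_hyperplanes K \<longrightarrow> newton f \<subset> newton g \<longrightarrow>
            (\<exists>s. s \<notin> K \<and> newton1 (toric_subst f s) \<subset> newton1 (toric_subst g s)))"
proof -
  define A where "A = {u. f u \<noteq> 0}"
  define B where "B = {u. g u \<noteq> 0}"
  have fA: "finite A" using assms(1) unfolding laurent_poly_def A_def .
  have fB: "finite B" using assms(2) unfolding laurent_poly_def B_def .
  have fAB: "finite (A \<union> B)" using fA fB by simp
  have nf: "newton f = convex hull (real_vec ` A)" unfolding newton_def A_def ..
  have ng: "newton g = convex hull (real_vec ` B)" unfolding newton_def B_def ..
  define K0 where "K0 = {s. \<not> inj_on (idot s) B}"
  define H0 where "H0 = (\<lambda>(u,w). (real_vec u - real_vec w, 0::real)) ` {(u,w). u\<in>B \<and> w\<in>B \<and> u\<noteq>w}"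
  have "{(u,w). u\<in>B \<and> w\<in>B \<and> u\<noteq>w} \<subseteq> B \<times> B" by blast
  then have "finite {(u,w). u\<in>B \<and> w\<in>B \<and> u\<noteq>w}" using fB finite_subset by blast
  then have H0fin: "finite H0" unfolding H0_def by (rule finite_imageI)
  have "\<forall>p\<in>H0. fst p \<noteq> 0"
  proof
    fix p assume "p \<in> H0"
    then obtain q where q: "p = (\<lambda>(u,w). (real_vec u - real_vec w, 0::real)) q"
      "q \<in> {(u,w). u\<in>B \<and> w\<in>B \<and> u\<noteq>w}" unfolding H0_def by (rule imageE)
    obtain u w where "q = (u,w)" by (cases q)
    then show "fst p \<noteq> 0" using q real_vec_inj[of u w] by auto
  qed
  then have H0nz: "\<forall>(a,b)\<in>H0. a \<noteq> 0" by (simp add: case_prod_beta)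
  have H0cov: "real_vec ` K0 \<subseteq> (\<Union>(a,b)\<in>H0. {x. a \<bullet> x = b})"
  proof
    fix x assume "x \<in> real_vec ` K0"
    then obtain s where s: "s \<in> K0" "x = real_vec s" by blast
    then obtain u w where uw: "u \<in> B" "w \<in> B" "idot s u = idot s w" "u \<noteq> w"
      unfolding K0_def inj_on_def by blast
    have mem: "(real_vec u - real_vec w, 0::real) \<in> H0"
      unfolding H0_def using uw by (intro image_eqI[where x="(u,w)"]) auto
    have "(real_vec u - real_vec w) \<bullet> real_vec s = 0"
      using uw(3) real_idot[of s u] real_idot[of s w]
      by (simp add: inner_diff_left inner_diff_right inner_commute)
    then have "x \<in> (\<lambda>(a,b). {x. a \<bullet> x = b}) (real_vec u - real_vec w, 0::real)" using s by simp
    then show "x \<in> (\<Union>(a,b)\<in>H0. {x. a \<bullet> x = b})" by (rule UN_I[OF mem])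
  qed
  have hK0: "in_finite_hyperplanes K0"
    unfolding in_finite_hyperplanes_def by (intro exI[of _ H0] conjI H0fin H0nz H0cov)
  have P1: "newton f \<subseteq> newton g \<longrightarrow>
               (\<forall>s. s \<notin> K0 \<longrightarrow> newton1 (toric_subst f s) \<subseteq> newton1 (toric_subst g s))"
  proof (intro impI allI)
    fix s assume "newton f \<subseteq> newton g" "s \<notin> K0"
    then show "newton1 (toric_subst f s) \<subseteq> newton1 (toric_subst g s)"
    proof -
      have "inj_on (idot s) {u. g u \<noteq> 0}" using \<open>s \<notin> K0\<close> unfolding K0_def B_def by simp
      then show ?thesis using incl \<open>newton f \<subseteq> newton g\<close> by blast
    qed
  qed
  have P2: "newton f \<subseteq> newton g"
    if hK: "in_finite_hyperplanes K"
    and hall: "\<forall>s. s \<notin> K \<longrightarrow> newton1 (toric_subst f s) \<subseteq> newton1 (toric_subst g s)" for K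
  proof (rule ccontr)
    assume nsub: "\<not> newton f \<subseteq> newton g"
    have "\<exists>u\<in>A. real_vec u \<notin> newton g"
    proof (rule ccontr)
      assume "\<not> ?thesis"
      then have "real_vec ` A \<subseteq> newton g" by blast
      then have "newton f \<subseteq> newton g" unfolding nf
        by (rule hull_minimal) (simp add: ng convex_convex_hull)
      then show False using nsub by blast
    qed
    then obtain u where u: "u \<in> A" "real_vec u \<notin> convex hull (real_vec ` B)" using ng by auto
    obtain s where s: "s \<notin> K" "inj_on (idot s) (A \<union> B)"
      "\<forall>y\<in>real_vec ` B. real_vec s \<bullet> y < real_vec s \<bullet> real_vec u"
      using key[OF finite_imageI[OF fB] u(2) fAB hK] by blast
    have injA: "inj_on (idot s) {u. f u \<noteq> 0}" using s(2) unfolding A_def by (rule inj_on_subset) blast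
    have "real_of_int (idot s u) \<in> newton1 (toric_subst f s)"
      using in_newton1[OF injA] u(1) unfolding A_def by blast
    moreover have "newton1 (toric_subst g s) \<subseteq> {..< real_of_int (idot s u)}"
    proof (rule upper, rule ballI)
      fix w assume "w \<in> {u. g u \<noteq> 0}"
      then have "real_vec s \<bullet> real_vec w < real_vec s \<bullet> real_vec u" using s(3) unfolding B_def by blast
      then show "real_of_int (idot s w) < real_of_int (idot s u)" by (simp add: real_idot)
    qed
    moreover have "newton1 (toric_subst f s) \<subseteq> newton1 (toric_subst g s)" using hall s(1) by blast
    ultimately have "real_of_int (idot s u) \<in> {..< real_of_int (idot s u)}" by blast
    then show False by simp
  qed
  have P3: "\<exists>s. s \<notin> K \<and> newton1 (toric_subst f s) \<subset> newton1 (toric_subst g s)"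
    if hK: "in_finite_hyperplanes K" and ps: "newton f \<subset> newton g" for K
  proof -
    have "\<exists>w\<in>B. real_vec w \<notin> newton f"
    proof (rule ccontr)
      assume "\<not> ?thesis"
      then have "real_vec ` B \<subseteq> newton f" by blast
      then have "newton g \<subseteq> newton f" unfolding ng
        by (rule hull_minimal) (simp add: nf convex_convex_hull)
      then show False using ps by blast
    qed
    then obtain w where w: "w \<in> B" "real_vec w \<notin> convex hull (real_vec ` A)" using nf by auto
    obtain s where s: "s \<notin> K" "inj_on (idot s) (A \<union> B)"
      "\<forall>y\<in>real_vec ` A. real_vec s \<bullet> y < real_vec s \<bullet> real_vec w"
      using key[OF finite_imageI[OF fA] w(2) fAB hK] by blast
    have injB: "inj_on (idot s) {u. g u \<noteq> 0}" using s(2) unfolding B_def by (rule inj_on_subset) blast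
    have sub: "newton1 (toric_subst f s) \<subseteq> newton1 (toric_subst g s)"
      using incl[OF injB] ps by blast
    have inG: "real_of_int (idot s w) \<in> newton1 (toric_subst g s)"
      using in_newton1[OF injB] w(1) unfolding B_def by blast
    have "newton1 (toric_subst f s) \<subseteq> {..< real_of_int (idot s w)}"
    proof (rule upper, rule ballI)
      fix u assume "u \<in> {u. f u \<noteq> 0}"
      then have "real_vec s \<bullet> real_vec u < real_vec s \<bullet> real_vec w" using s(3) unfolding A_def by blast
      then show "real_of_int (idot s u) < real_of_int (idot s w)" by (simp add: real_idot)
    qed
    then have "real_of_int (idot s w) \<notin> newton1 (toric_subst f s)" by fastforce
    then have "newton1 (toric_subst f s) \<subset> newton1 (toric_subst g s)" using sub inG by blast
    then show ?thesis using s(1) by blast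
  qed
  show ?thesis
  proof (intro conjI allI impI)
    show "\<exists>K. in_finite_hyperplanes K \<and>
            (newton f \<subseteq> newton g \<longrightarrow>
               (\<forall>s. s \<notin> K \<longrightarrow> newton1 (toric_subst f s) \<subseteq> newton1 (toric_subst g s)))"
      using hK0 P1 by blast
  next
    fix K :: "(int^'n) set" assume "in_finite_hyperplanes K"
      "\<forall>s. s \<notin> K \<longrightarrow> newton1 (toric_subst f s) \<subseteq> newton1 (toric_subst g s)"
    then show "newton f \<subseteq> newton g" by (rule P2)
  next
    fix K :: "(int^'n) set" assume "in_finite_hyperplanes K" "newton f \<subset> newton g"
    then show "\<exists>s. s \<notin> K \<and> newton1 (toric_subst f s) \<subset> newton1 (toric_subst g s)" by (rule P3)
  qed
qed

end
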